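(* The eventual equality relation $E_0(\mathbb{N})$ on the Baire space $\mathbb{N}^\mathbb{N}$ is $\Pi^0_1$-graphable with diameter $2$.
   Context: $xE_0(\mathbb{N})y$ iff there is $m$ with $x(n)=y(n)$ for all $n\ge m$ ($x,y\in\mathbb{N}^\mathbb{N}$). $E$ is $\Gamma$-graphable with diameter $k$ if there is a simple undirected graph $G$ in $\Gamma$ whose connectedness relation equals $E$ and $k$ is the least integer such that any two $G$-connected points are joined by a path of length at most $k$. *)

theory Defs
  imports "HOL-Analysis.Analysis"
begin

definition E0 :: "(nat \<Rightarrow> nat) \<Rightarrow> (nat \<Rightarrow> nat) \<Rightarrow> bool" where
  "E0 x y \<longleftrightarrow> (\<exists>m. \<forall>n\<ge>m. x n = y n)"

definition simple_graph :: "('a \<Rightarrow> 'a \<Rightarrow> bool) \<Rightarrow> bool" where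
  "simple_graph G \<longleftrightarrow> (\<forall>x y. G x y \<longrightarrow> G y x) \<and> (\<forall>x. \<not> G x x)"

definition diam_le :: "('a \<Rightarrow> 'a \<Rightarrow> bool) \<Rightarrow> nat \<Rightarrow> bool" where
  "diam_le G k \<longleftrightarrow> (\<forall>x y. G\<^sup>*\<^sup>* x y \<longrightarrow> (\<exists>n\<le>k. (G ^^ n) x y))"

definition has_diameter :: "('a \<Rightarrow> 'a \<Rightarrow> bool) \<Rightarrow> nat \<Rightarrow> bool" where
  "has_diameter G k \<longleftrightarrow> diam_le G k \<and> (\<forall>j<k. \<not> diam_le G j)"

end

theory Submission
  imports Defs
begin

instance prod :: (discrete_topology, discrete_topology) discrete_topology
proof
  fix S :: "('a \<times> 'b) set"
  show "open S"
  proof (rule open_prod_intro)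
    fix x assume "x \<in> S"
    then show "\<exists>A B. open A \<and> open B \<and> x \<in> A \<times> B \<and> A \<times> B \<subseteq> S"
      by (intro exI[of _ "{fst x}"] exI[of _ "{snd x}"]) (auto intro: open_discrete)
  qed
qed

lemma closed_discrete: "closed (S :: 'a::discrete_topology set)"
  unfolding closed_def by (rule open_discrete)

lemma cont_coord: "continuous_on UNIV (\<lambda>p :: (nat \<Rightarrow> nat) \<times> (nat \<Rightarrow> nat). fst p i)"
  "continuous_on UNIV (\<lambda>p :: (nat \<Rightarrow> nat) \<times> (nat \<Rightarrow> nat). snd p i)"
proof -
  have c: "continuous_on UNIV (\<lambda>x :: nat \<Rightarrow> nat. x i)" by simp
  show "continuous_on UNIV (\<lambda>p :: (nat \<Rightarrow> nat) \<times> (nat \<Rightarrow> nat). fst p i)"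
    using continuous_on_compose[OF continuous_on_fst[OF continuous_on_id] continuous_on_subset[OF c]]
    by (simp add: o_def)
  show "continuous_on UNIV (\<lambda>p :: (nat \<Rightarrow> nat) \<times> (nat \<Rightarrow> nat). snd p i)"
    using continuous_on_compose[OF continuous_on_snd[OF continuous_on_id] continuous_on_subset[OF c]]
    by (simp add: o_def)
qed

definition GG :: "(nat \<Rightarrow> nat) \<Rightarrow> (nat \<Rightarrow> nat) \<Rightarrow> bool" where
  "GG x y \<longleftrightarrow> x 0 \<noteq> y 0 \<and> (\<forall>n. n \<ge> max (x 0) (y 0) \<longrightarrow> x n = y n)"

lemma GG_closed: "closed {p :: (nat \<Rightarrow> nat) \<times> (nat \<Rightarrow> nat). GG (fst p) (snd p)}"
proof -
  let ?g = "\<lambda>p :: (nat \<Rightarrow> nat) \<times> (nat \<Rightarrow> nat). (fst p 0, snd p 0)"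
  let ?h = "\<lambda>n (p :: (nat \<Rightarrow> nat) \<times> (nat \<Rightarrow> nat)). (fst p 0, snd p 0, fst p n, snd p n)"
  have eq: "{p :: (nat \<Rightarrow> nat) \<times> (nat \<Rightarrow> nat). GG (fst p) (snd p)} =
    ?g -` {(a,b). a \<noteq> b} \<inter> (\<Inter>n. ?h n -` {(a,b,c,d). n \<ge> max a b \<longrightarrow> c = d})"
    by (auto simp: GG_def)
  have c0: "continuous_on UNIV ?g"
    by (intro continuous_on_Pair cont_coord)
  have c: "continuous_on UNIV (?h n)" for n
    by (intro continuous_on_Pair cont_coord)
  show ?thesis unfolding eq
    by (intro closed_Int closed_INT ballI closed_vimage[OF closed_discrete] c0 c)
qed

lemma E0_equiv: "E0\<^sup>*\<^sup>* = E0"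
proof -
  have r: "E0 x x" for x unfolding E0_def by auto
  have t: "E0 x z" if "E0 x y" "E0 y z" for x y z
  proof -
    from that obtain m1 m2 where "\<forall>n\<ge>m1. x n = y n" "\<forall>n\<ge>m2. y n = z n" unfolding E0_def by blast
    then show ?thesis unfolding E0_def by (intro exI[of _ "max m1 m2"]) auto
  qed
  show ?thesis
  proof (intro ext iffI)
    fix x y assume "E0\<^sup>*\<^sup>* x y" then show "E0 x y"
      by (induction rule: rtranclp_induct) (auto intro: r t)
  qed auto
qed

lemma GG_path: assumes "E0 x y" shows "\<exists>z. GG x z \<and> GG z y"
proof -
  from assms obtain m where m: "\<forall>n\<ge>m. x n = y n" unfolding E0_def by blast
  define a where "a = m + x 0 + y 0 + 1"
  define z where "z = x(0 := a)"
  have "GG x z" unfolding GG_def z_def a_def by auto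
  moreover have "GG z y" unfolding GG_def z_def a_def using m by auto
  ultimately show ?thesis by blast
qed

theorem proposition3p8:
  "\<exists>G :: (nat \<Rightarrow> nat) \<Rightarrow> (nat \<Rightarrow> nat) \<Rightarrow> bool.
     simple_graph G \<and>
     closed {p :: (nat \<Rightarrow> nat) \<times> (nat \<Rightarrow> nat). G (fst p) (snd p)} \<and>
     G\<^sup>*\<^sup>* = E0 \<and>
     has_diameter G 2"
proof (intro exI[of _ GG] conjI)
  show "simple_graph GG" unfolding simple_graph_def GG_def by (auto simp: max.commute)
  show "closed {p :: (nat \<Rightarrow> nat) \<times> (nat \<Rightarrow> nat). GG (fst p) (snd p)}" by (rule GG_closed)
  have sub: "GG x y \<Longrightarrow> E0 x y" for x y unfolding GG_def E0_def by blast
  have two: "(GG ^^ 2) x y" if E: "E0 x y" for x y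
  proof -
    obtain z where "GG x z" "GG z y" using GG_path[OF E] by blast
    then show ?thesis by (auto simp: numeral_2_eq_2 relcompp_apply)
  qed
  have eqE: "GG\<^sup>*\<^sup>* = E0"
  proof (intro ext iffI)
    fix x y assume "GG\<^sup>*\<^sup>* x y"
    then have "E0\<^sup>*\<^sup>* x y" by (rule rtranclp_mono[THEN predicate2D, rotated]) (auto intro: sub)
    then show "E0 x y" using E0_equiv by simp
  next
    fix x y assume "E0 x y"
    then have "(GG ^^ 2) x y" by (rule two)
    then show "GG\<^sup>*\<^sup>* x y" by (metis relpowp_imp_rtranclp)
  qed
  show "GG\<^sup>*\<^sup>* = E0" by (rule eqE)
  define x0 :: "nat \<Rightarrow> nat" where "x0 = (\<lambda>_. 0)"
  define y0 :: "nat \<Rightarrow> nat" where "y0 = x0(1 := 1)"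
  have E: "E0 x0 y0" unfolding E0_def x0_def y0_def by (intro exI[of _ 2]) auto
  have ne: "x0 \<noteq> y0" unfolding x0_def y0_def by (metis fun_upd_same zero_neq_one)
  have nG: "\<not> GG x0 y0" unfolding GG_def x0_def y0_def by auto
  have "\<not> diam_le GG j" if "j < 2" for j
  proof
    assume "diam_le GG j"
    then obtain n where "n \<le> j" "(GG ^^ n) x0 y0" unfolding diam_le_def using E eqE by auto
    with that have "n = 0 \<or> n = 1" by auto
    then show False using \<open>(GG ^^ n) x0 y0\<close> ne nG by auto
  qed
  moreover have "diam_le GG 2" unfolding diam_le_def eqE using two by blast
  ultimately show "has_diameter GG 2" unfolding has_diameter_def by blast
qed

end
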